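(* Let $\varepsilon>0$ be fixed, $d$ a sufficiently large constant (depending on $\varepsilon$) and $q\ge(2+\varepsilon)d$. For integers $n\ge d$ and $L\ge1$, let $X\sim\mathrm{Bin}(n,d/n)$ and let $X_1,X_2,\dots$ be independent random variables where, for $i\le L$, $X_i$ is distributed as $X$, and for $i>L$, $X_i$ is distributed as $X\cdot\mathbf{1}[X\ge(q-5)/2]$. Let $Y_0=L$ and $Y_i=Y_{i-1}+X_i-1$ for $i\ge1$. Then there exist constants $C_1,C_2>0$ depending only on $d$ and $\varepsilon$ such that for all $n$, $L$ and $t\ge0$, $$\Pr[Y_t\ge0]\le\exp(-C_1t+C_2L).$$ *)

theory Defs
  imports "HOL-Probability.Probability"
begin

definition Xlaw :: "nat \<Rightarrow> real \<Rightarrow> nat \<Rightarrow> nat \<Rightarrow> nat \<Rightarrow> nat pmf" where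
  "Xlaw n d q L i =
     (if i \<le> L then binomial_pmf n (d / real n)
      else map_pmf (\<lambda>x. if real x \<ge> (real q - 5) / 2 then x else 0) (binomial_pmf n (d / real n)))"

definition Ylaw :: "nat \<Rightarrow> real \<Rightarrow> nat \<Rightarrow> nat \<Rightarrow> nat \<Rightarrow> int pmf" where
  "Ylaw n d q L t =
     map_pmf (\<lambda>X. int L + (\<Sum>i\<in>{1..t}. int (X i) - 1)) (Pi_pmf {1..t} 0 (Xlaw n d q L))"

end

theory Submission imports Defs begin

lemma binom_mgf:
  assumes p: "p \<in> {0..1::real}"
  shows "measure_pmf.expectation (binomial_pmf n p) (\<lambda>x. exp (\<mu> * real x)) = (1 - p + p * exp \<mu>) ^ n"
proof -
  have "measure_pmf.expectation (binomial_pmf n p) (\<lambda>x. exp (\<mu> * real x))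
      = (\<Sum>k\<le>n. real (n choose k) * (p * exp \<mu>) ^ k * (1 - p) ^ (n - k))"
    using p by (simp add: expectation_binomial_pmf' exp_of_nat_mult[symmetric] power_mult_distrib mult_ac)
  also have "\<dots> = (p * exp \<mu> + (1 - p)) ^ n"
    by (simp add: binomial_ring)
  finally show ?thesis by (simp add: add.commute)
qed

lemma binom_mgf_le:
  assumes p: "p \<in> {0..1::real}"
  shows "measure_pmf.expectation (binomial_pmf n p) (\<lambda>x. exp (\<mu> * real x)) \<le> exp (real n * p * (exp \<mu> - 1))"
proof -
  have "(1 - p + p * exp \<mu>) ^ n = (1 + p * (exp \<mu> - 1)) ^ n" by (simp add: algebra_simps)
  also have "\<dots> \<le> (exp (p * (exp \<mu> - 1))) ^ n"
  proof (rule power_mono)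
    show "1 + p * (exp \<mu> - 1) \<le> exp (p * (exp \<mu> - 1))" by (rule exp_ge_add_one_self)
    have "0 \<le> 1 - p + p * exp \<mu>" using p by (auto intro!: add_nonneg_nonneg)
    then show "0 \<le> 1 + p * (exp \<mu> - 1)" by (simp add: algebra_simps)
  qed
  also have "\<dots> = exp (real n * p * (exp \<mu> - 1))"
    by (simp add: exp_of_nat_mult[symmetric] mult_ac)
  finally show ?thesis using binom_mgf[OF p] by simp
qed

lemma tail_mgf:
  assumes p: "p \<in> {0..1::real}" and lm: "0 \<le> l" "l \<le> \<mu>" and kk: "k \<le> k'"
  shows "measure_pmf.expectation (map_pmf (\<lambda>x. if real x \<ge> k' then x else 0) (binomial_pmf n p)) (\<lambda>x. exp (l * real x))
     \<le> 1 + exp (real n * p * (exp \<mu> - 1) - (\<mu> - l) * k)"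
proof -
  have pw: "exp (l * real (if real x \<ge> k' then x else 0)) \<le> 1 + exp (- (\<mu> - l) * k) * exp (\<mu> * real x)" for x :: nat
  proof (cases "real x \<ge> k'")
    case True
    have "(\<mu> - l) * k \<le> (\<mu> - l) * real x" using True kk lm by (intro mult_left_mono) auto
    then have "exp (l * real x) \<le> exp (- (\<mu> - l) * k) * exp (\<mu> * real x)"
      by (simp add: exp_add[symmetric] algebra_simps)
    then show ?thesis using True by (simp add: add_increasing)
  next
    case False
    then show ?thesis by (simp add: add_increasing)
  qed
  have "measure_pmf.expectation (map_pmf (\<lambda>x. if real x \<ge> k' then x else 0) (binomial_pmf n p)) (\<lambda>x. exp (l * real x))
      = measure_pmf.expectation (binomial_pmf n p) (\<lambda>x. exp (l * real (if real x \<ge> k' then x else 0)))"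
    by (simp add: integral_map_pmf)
  also have "\<dots> \<le> measure_pmf.expectation (binomial_pmf n p) (\<lambda>x. 1 + exp (- (\<mu> - l) * k) * exp (\<mu> * real x))"
    using p by (intro integral_mono pw) auto
  also have "\<dots> = 1 + exp (- (\<mu> - l) * k) * measure_pmf.expectation (binomial_pmf n p) (\<lambda>x. exp (\<mu> * real x))"
    using p by (simp add: Bochner_Integration.integral_add)
  also have "\<dots> \<le> 1 + exp (- (\<mu> - l) * k) * exp (real n * p * (exp \<mu> - 1))"
    using binom_mgf_le[OF p] by (intro add_left_mono mult_left_mono) auto
  also have "\<dots> = 1 + exp (real n * p * (exp \<mu> - 1) - (\<mu> - l) * k)"
    by (simp add: exp_add[symmetric] algebra_simps)
  finally show ?thesis .
qed


lemma main_bound: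
  fixes d l \<delta> \<mu> B C1 :: real and q n L t :: nat
  assumes d: "d > 0" "real n \<ge> d"
  and l: "l > 0" "l \<le> \<mu>" and mu: "\<mu> = \<delta>/2" and delta: "0 < \<delta>" "\<delta> \<le> 1"
  and ld: "l * (1 + \<delta>) = \<delta>^2 / 8"
  and dl: "d \<ge> 16 / (\<delta>^2 * l)"
  and qk: "(1 + \<delta>) * d \<le> (real q - 5) / 2"
  and B: "B = d * (exp l - 1)" and C1: "C1 = l / 2"
  shows "measure_pmf.prob (Ylaw n d q L t) {y. y \<ge> 0} \<le> exp (- C1 * real t + (l + B + C1) * real L)"
proof -
  define p where "p = d / real n"
  have n0: "real n > 0" using d by linarith
  have p: "p \<in> {0..1}" using d n0 by (auto simp: p_def)
  have np: "real n * p = d" using n0 by (simp add: p_def)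
  define f where "f = (\<lambda>(i::nat) (x::nat). exp (l * (real x - 1)))"
  have fsplit: "f i x = exp (-l) * exp (l * real x)" for i x
    by (simp add: f_def exp_add[symmetric] algebra_simps)
  have fsplit': "f i = (\<lambda>x. exp (-l) * exp (l * real x))" for i
    by (rule ext) (rule fsplit)
  have fb: "finite (set_pmf (binomial_pmf n p))" using p by auto
  have fm: "finite (set_pmf (map_pmf g M))" if "finite (set_pmf M)" for g and M :: "nat pmf"
    using that by simp
  have fin_X: "finite (set_pmf (Xlaw n d q L i))" for i
    unfolding Xlaw_def p_def[symmetric] using fb fm[OF fb] by simp
  have int_X: "integrable (measure_pmf (Xlaw n d q L i)) g" for i and g :: "nat \<Rightarrow> real"
    by (rule integrable_measure_pmf_finite[OF fin_X])
  have B0: "B \<ge> 0" using B d l by simp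
  have F1: "measure_pmf.expectation (Xlaw n d q L i) (f i) \<le> exp B" if "i \<le> L" for i
  proof -
    have "measure_pmf.expectation (Xlaw n d q L i) (f i)
        = exp (-l) * measure_pmf.expectation (binomial_pmf n p) (\<lambda>x. exp (l * real x))"
      using that by (simp add: Xlaw_def p_def fsplit')
    also have "\<dots> \<le> 1 * exp (real n * p * (exp l - 1))"
      using binom_mgf_le[OF p, of n l] l by (intro mult_mono) auto
    also have "\<dots> = exp B" using np B by simp
    finally show ?thesis .
  qed
  have F2: "measure_pmf.expectation (Xlaw n d q L i) (f i) \<le> exp (- C1)" if "\<not> i \<le> L" for i
  proof -
    define k where "k = (1 + \<delta>) * d"
    have "measure_pmf.expectation (Xlaw n d q L i) (f i)
        = exp (-l) * measure_pmf.expectation (map_pmf (\<lambda>x. if real x \<ge> (real q - 5) / 2 then x else 0) (binomial_pmf n p)) (\<lambda>x. exp (l * real x))"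
      using that by (simp add: Xlaw_def p_def fsplit')
    also have "\<dots> \<le> exp (-l) * (1 + exp (real n * p * (exp \<mu> - 1) - (\<mu> - l) * k))"
      using tail_mgf[OF p, of l \<mu> k "(real q - 5) / 2" n] l qk by (intro mult_left_mono) (auto simp: k_def)
    also have "\<dots> \<le> exp (-l) * (1 + exp (- (d * \<delta>^2 / 8)))"
    proof -
      have "exp \<mu> \<le> 1 + \<mu> + \<mu>^2" using exp_bound[of \<mu>] mu delta by auto
      then have "d * (exp \<mu> - 1) \<le> d * (\<mu> + \<mu>^2)" using d by (intro mult_left_mono) auto
      moreover have "d * (\<mu> + \<mu>^2) - (\<mu> - l) * k = - (d * \<delta>^2 / 8)"
      proof -
        have e: "d * (l * (1 + \<delta>)) = d * (\<delta>^2 / 8)" using ld by (simp only:)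
        show ?thesis unfolding k_def mu using e by (simp add: algebra_simps power2_eq_square) 
      qed
      ultimately have "real n * p * (exp \<mu> - 1) - (\<mu> - l) * k \<le> - (d * \<delta>^2 / 8)"
        unfolding np by linarith
      then show ?thesis by (intro mult_left_mono add_left_mono) auto
    qed
    also have "\<dots> \<le> exp (-l) * exp (l / 2)"
    proof -
      define x where "x = d * \<delta>^2 / 8"
      have x0: "x > 0" using d delta by (simp add: x_def)
      have "x \<ge> 2 / l"
      proof -
        have "16 / (\<delta>^2 * l) \<le> d" by (rule dl)
        then have "16 \<le> d * (\<delta>^2 * l)" using l delta by (simp add: pos_divide_le_eq)
        then show ?thesis using l by (simp add: x_def pos_divide_le_eq mult_ac)
      qed
      have "exp (-x) = 1 / exp x" by (simp add: exp_minus field_simps)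
      also have "\<dots> \<le> 1 / x"
      proof -
        have "x \<le> exp x" using exp_ge_add_one_self[of x] by linarith
        then show ?thesis using x0 by (intro divide_left_mono) auto
      qed
      also have "\<dots> \<le> l / 2" using \<open>x \<ge> 2 / l\<close> l x0
        by (simp add: divide_le_eq field_simps)
      finally have "exp (-x) \<le> l / 2" .
      then have "1 + exp (-x) \<le> exp (l / 2)"
        using exp_ge_add_one_self[of "l/2"] by linarith
      then show ?thesis unfolding x_def by (intro mult_left_mono) auto
    qed
    also have "\<dots> = exp (- C1)" using C1 by (simp add: exp_add[symmetric])
    finally show ?thesis .
  qed
  define P where "P = Pi_pmf {1..t} 0 (Xlaw n d q L)"
  define Y where "Y = (\<lambda>X. int L + (\<Sum>i\<in>{1..t}. int (X i) - 1))"
  have Ylaw: "Ylaw n d q L t = map_pmf Y P" by (simp add: Ylaw_def P_def Y_def)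
  have finP: "finite (set_pmf P)" unfolding P_def
    by (subst set_Pi_pmf) (auto intro!: finite_PiE_dflt fin_X)
  have finY: "finite (set_pmf (Ylaw n d q L t))" unfolding Ylaw using finP by simp
  have "measure_pmf.prob (Ylaw n d q L t) {y. y \<ge> 0}
      \<le> measure_pmf.prob (Ylaw n d q L t) {y \<in> space (measure_pmf (Ylaw n d q L t)). exp (l * real_of_int y) \<ge> 1}"
    using l by (intro measure_pmf.finite_measure_mono) auto
  also have "\<dots> \<le> measure_pmf.expectation (Ylaw n d q L t) (\<lambda>y. exp (l * real_of_int y)) / 1"
    by (intro integral_Markov_inequality_measure integrable_measure_pmf_finite finY) auto
  also have "\<dots> = measure_pmf.expectation P (\<lambda>X. exp (l * real_of_int (Y X)))"
    by (simp add: Ylaw integral_map_pmf)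
  also have "\<dots> = measure_pmf.expectation P (\<lambda>X. exp (l * real L) * (\<Prod>i\<in>{1..t}. f i (X i)))"
    by (simp add: Y_def f_def of_int_sum algebra_simps exp_add exp_sum sum_distrib_left)
  also have "\<dots> = exp (l * real L) * measure_pmf.expectation P (\<lambda>X. \<Prod>i\<in>{1..t}. f i (X i))"
    by simp
  also have "measure_pmf.expectation P (\<lambda>X. \<Prod>i\<in>{1..t}. f i (X i))
     = (\<Prod>i\<in>{1..t}. measure_pmf.expectation (Xlaw n d q L i) (f i))"
    unfolding P_def by (intro expectation_prod_Pi_pmf int_X) (auto simp: f_def)
  also have "\<dots> \<le> (\<Prod>i\<in>{1..t}. exp (- C1) * (if i \<le> L then exp (B + C1) else 1))"
  proof (intro prod_mono conjI)
    fix i assume "i \<in> {1..t}"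
    show "0 \<le> measure_pmf.expectation (Xlaw n d q L i) (f i)"
      by (intro integral_nonneg_AE AE_pmfI) (auto simp: f_def)
    show "measure_pmf.expectation (Xlaw n d q L i) (f i) \<le> exp (- C1) * (if i \<le> L then exp (B + C1) else 1)"
      using F1[of i] F2[of i] by (auto simp: exp_add[symmetric])
  qed
  also have "\<dots> = exp (- C1) ^ t * (\<Prod>i\<in>{1..t}. (if i \<le> L then exp (B + C1) else 1))"
    by (simp add: prod.distrib)
  also have "(\<Prod>i\<in>{1..t}. (if i \<le> L then exp (B + C1) else 1)) = (\<Prod>i\<in>{i\<in>{1..t}. i \<le> L}. exp (B + C1))"
    by (rule prod.inter_filter[symmetric]) simp
  also have "\<dots> = exp (B + C1) ^ card {i\<in>{1..t}. i \<le> L}" by simp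
  also have "\<dots> \<le> exp (B + C1) ^ L"
  proof (rule power_increasing)
    have "{i\<in>{1..t}. i \<le> L} \<subseteq> {1..L}" by auto
    then show "card {i\<in>{1..t}. i \<le> L} \<le> L" using card_mono[of "{1..L}"] by fastforce
    show "1 \<le> exp (B + C1)" using B0 C1 l by simp
  qed
  finally have "measure_pmf.prob (Ylaw n d q L t) {y. y \<ge> 0}
     \<le> exp (l * real L) * (exp (- C1) ^ t * exp (B + C1) ^ L)"
    by (simp add: mult_left_mono)
  also have "\<dots> = exp (- C1 * real t + (l + B + C1) * real L)"
    by (simp add: exp_of_nat_mult[symmetric] exp_add[symmetric] algebra_simps)
  finally show ?thesis .
qed


theorem mainTheorem16:
  fixes \<epsilon> :: real
  assumes "\<epsilon> > 0"
  shows "\<exists>d0::real. \<forall>d::real. d \<ge> d0 \<longrightarrow>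
           (\<exists>C1>0. \<exists>C2>0. \<forall>q::nat. real q \<ge> (2 + \<epsilon>) * d \<longrightarrow>
              (\<forall>(n::nat) (L::nat) (t::nat). real n \<ge> d \<and> L \<ge> 1 \<longrightarrow>
                 measure_pmf.prob (Ylaw n d q L t) {y. y \<ge> 0}
                   \<le> exp (- C1 * real t + C2 * real L)))"
proof -
  define \<delta> where "\<delta> = min (\<epsilon>/4) 1"
  define \<mu> where "\<mu> = \<delta> / 2"
  define l where "l = \<delta>^2 / (8 * (1 + \<delta>))"
  have delta: "0 < \<delta>" "\<delta> \<le> 1" "\<delta> \<le> \<epsilon>/4" using assms by (auto simp: \<delta>_def)
  have l0: "l > 0" using delta by (simp add: l_def)
  have lmu: "l \<le> \<mu>" using delta unfolding l_def \<mu>_def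
    by (simp add: divide_le_eq power2_eq_square field_simps)
  have ld: "l * (1 + \<delta>) = \<delta>^2 / 8" using delta by (simp add: l_def field_simps)
  define d0 where "d0 = max (10/\<epsilon>) (16 / (\<delta>^2 * l)) + 1"
  show ?thesis
  proof (rule exI[of _ d0], intro allI impI)
    fix d assume dd0: "d \<ge> d0"
    have d10: "d \<ge> 10/\<epsilon>" and d16: "d \<ge> 16 / (\<delta>^2 * l)" using dd0 by (auto simp: d0_def)
    have dpos: "d > 0" using d10 assms by (smt (verit) divide_pos_pos)
    define B where "B = d * (exp l - 1)"
    have B0: "B \<ge> 0" using dpos l0 by (simp add: B_def)
    have main: "\<forall>q::nat. real q \<ge> (2 + \<epsilon>) * d \<longrightarrow>
              (\<forall>(n::nat) (L::nat) (t::nat). real n \<ge> d \<and> L \<ge> 1 \<longrightarrow>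
                 measure_pmf.prob (Ylaw n d q L t) {y. y \<ge> 0}
                   \<le> exp (- (l/2) * real t + (l + B + l/2) * real L))"
    proof (intro allI impI)
      fix q :: nat and n L t :: nat
      assume q: "(2 + \<epsilon>) * d \<le> real q" and nL: "d \<le> real n \<and> 1 \<le> L"
      have e10: "\<epsilon> * d \<ge> 10" using d10 assms by (simp add: divide_le_eq mult.commute)
      have "\<delta> * d \<le> (\<epsilon>/4) * d" using delta dpos by (intro mult_right_mono) auto
      then have "2 * \<delta> * d \<le> \<epsilon> * d / 2" by simp
      then have qk: "(1 + \<delta>) * d \<le> (real q - 5) / 2" using q e10 by (simp add: algebra_simps)
      show "measure_pmf.prob (Ylaw n d q L t) {y. y \<ge> 0} \<le> exp (- (l/2) * real t + (l + B + l/2) * real L)"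
        by (rule main_bound[OF dpos _ l0 lmu \<mu>_def delta(1,2) ld d16 qk B_def refl]) (use nL in auto)
    qed
    have "0 < l/2" "0 < l + B + l/2" using l0 B0 by auto
    then show "\<exists>C1>0. \<exists>C2>0. \<forall>q::nat. real q \<ge> (2 + \<epsilon>) * d \<longrightarrow>
              (\<forall>(n::nat) (L::nat) (t::nat). real n \<ge> d \<and> L \<ge> 1 \<longrightarrow>
                 measure_pmf.prob (Ylaw n d q L t) {y. y \<ge> 0}
                   \<le> exp (- C1 * real t + C2 * real L))"
      using main by blast
  qed
qed

end
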